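(* Let $\phi:\mathbb{N}\to\mathbb{N}$ satisfy $\phi(n)\to\infty$ as $n\to\infty$. Then there is no triple $(f,A,P)$, where $f$ assigns a binary string $f(C_n)$ of length at most $\log\log\log n-\phi(n)$ to the $n$-node oriented ring $C_n$ (for all sufficiently large $n$), $A$ is a deterministic exploration algorithm and $P$ is a polynomial, such that for every sufficiently large $n$ the agent executing $A$ with input $f(C_n)$, starting at a node of $C_n$, visits all nodes of $C_n$ and stops after at most $P(n)$ edge traversals. In particular, neither a map oracle nor an instance oracle giving advice of size at most $\log\log\log n-\phi(n)$ permits exploration of all $n$-node oriented rings in time polynomial in $n$.
   Context: Model: a graph is a simple connected undirected graph with $n$ nodes. Nodes are unlabeled; at each node of degree $d$ the incident edges carry distinct port numbers $0,\dots,d-1$. A mobile agent starts at some node. At each step, located at a node $u$ whose degree it knows, it chooses a port at $u$ and traverses the corresponding edge to a neighbor $w$; upon arrival it learns the port number of this edge at $w$ and the degree of $w$. The agent must visit all nodes and stop; the time is the number of edge traversals. A deterministic exploration algorithm receives as input a binary string (advice); the size of advice is its length. A map oracle assigns advice to each port-numbered graph; an instance oracle assigns advice to each pair (graph, starting node). An oriented ring is a cycle in which at every node the ports $0$ and $1$ are in clockwise order (so all nodes look identical). Logarithms are to base 2. *)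

theory Defs
  imports "HOL-Computational_Algebra.Polynomial"
begin

text \<open>
  Observations: after each traversal the agent records a triple
  (port taken, port of the edge at the arrival node, degree of the arrival node).
  A deterministic exploration algorithm is a function that, given the advice string,
  the degree of the starting node and the history of observations, either returns
  Some p (take port p) or None (stop).
\<close>

type_synonym obs = "nat \<times> nat \<times> nat"
type_synonym algorithm = "bool list \<Rightarrow> nat \<Rightarrow> obs list \<Rightarrow> nat option"

text \<open>
  The n-node oriented ring: nodes 0..n-1 in clockwise order; at node v, port 0 leads
  clockwise to (v+1) mod n, where the edge has port 1; port 1 leads counterclockwise to
  (v+n-1) mod n, where the edge has port 0. Every node has degree 2.
  ring_run A s n v k = (position, history) after k steps of A with advice s, starting at v.
\<close>

fun ring_run :: "algorithm \<Rightarrow> bool list \<Rightarrow> nat \<Rightarrow> nat \<Rightarrow> nat \<Rightarrow> nat \<times> obs list" where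
  "ring_run A s n v 0 = (v, [])"
| "ring_run A s n v (Suc k) =
     (let (u, h) = ring_run A s n v k in
      case A s 2 h of
        None \<Rightarrow> (u, h)
      | Some p \<Rightarrow> if p = 0 then ((u + 1) mod n, h @ [(0, 1, 2)])
                  else ((u + n - 1) mod n, h @ [(p, 0, 2)]))"

definition explores_ring_within ::
  "algorithm \<Rightarrow> bool list \<Rightarrow> nat \<Rightarrow> nat \<Rightarrow> real \<Rightarrow> bool" where
  "explores_ring_within A s n v T \<longleftrightarrow>
     (\<exists>t. real t \<le> T
        \<and> (\<forall>i<t. \<exists>p. A s 2 (snd (ring_run A s n v i)) = Some p \<and> p < 2)
        \<and> A s 2 (snd (ring_run A s n v t)) = None
        \<and> {fst (ring_run A s n v i) | i. i \<le> t} = {0..<n})"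

end

theory Submission
  imports Defs
begin

lemma hist_indep: "snd (ring_run A s n v i) = snd (ring_run A s 0 0 i)"
proof (induction i)
  case 0 then show ?case by simp
next
  case (Suc i)
  then show ?case
    by (auto simp: split_beta split: option.splits)
qed

lemma cover:
  fixes U :: "nat set"
  shows "finite U \<Longrightarrow> card U \<le> k \<Longrightarrow> 2 \<le> a \<Longrightarrow> 1 \<le> D \<Longrightarrow>
    (\<forall>n. a \<le> n \<and> n \<le> N \<longrightarrow> (\<exists>u\<in>U. n \<le> u+1 \<and> u \<le> n^D)) \<Longrightarrow> N < a^((D+1)^k)"
proof (induction k arbitrary: U a)
  case 0
  then have "U = {}" by auto
  with 0 show ?case by force
next
  case (Suc k)
  show ?case
  proof (cases "N < a")
    case True
    have "a \<le> a^((D+1)^Suc k)"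
      using Suc.prems(3) by (simp add: self_le_power)
    with True show ?thesis by simp
  next
    case False
    then obtain u where u: "u \<in> U" "a \<le> u+1" "u \<le> a^D" using Suc.prems(5) by auto
    have fin: "finite (U - {u})" using Suc.prems(1) by simp
    have ck: "card (U - {u}) \<le> k" using Suc.prems(2) u(1) Suc.prems(1) by simp
    have cov: "\<forall>n. u+2 \<le> n \<and> n \<le> N \<longrightarrow> (\<exists>u'\<in>U - {u}. n \<le> u'+1 \<and> u' \<le> n^D)"
    proof (intro allI impI)
      fix n assume n: "u+2 \<le> n \<and> n \<le> N"
      then have "a \<le> n" using u by simp
      then obtain u' where "u' \<in> U" "n \<le> u'+1" "u' \<le> n^D" using n Suc.prems(5) by auto
      then show "\<exists>u'\<in>U - {u}. n \<le> u'+1 \<and> u' \<le> n^D" using n by (intro bexI[of _ u']) auto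
    qed
    have IH: "N < (u+2)^((D+1)^k)"
      using Suc.IH[OF fin ck _ Suc.prems(4) cov] by simp
    have "a \<le> a^D" using Suc.prems(3,4) by (simp add: self_le_power)
    then have "a^D + 2 \<le> 2 * a^D" using Suc.prems(3) by linarith
    also have "2 * a^D \<le> a * a^D" using Suc.prems(3) by (rule mult_right_mono) simp
    finally have "u + 2 \<le> a^(D+1)" using u(3) by simp
    then have "(u+2)^((D+1)^k) \<le> (a^(D+1))^((D+1)^k)" by (rule power_mono) simp
    also have "\<dots> = a^((D+1)^Suc k)" by (simp only: power_Suc power_mult)
    finally show ?thesis using IH by simp
  qed
qed

lemma poly_bound:
  fixes P :: "real poly"
  shows "\<exists>D\<ge>1. \<exists>n0. \<forall>n\<ge>n0. poly P (real n) \<le> real n ^ D"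
proof -
  define C where "C = (\<Sum>i\<le>degree P. \<bar>coeff P i\<bar>)"
  obtain n0 :: nat where n0: "real n0 \<ge> max C 1" using real_arch_simple by blast
  have "\<forall>n\<ge>n0. poly P (real n) \<le> real n ^ (degree P + 1)"
  proof (intro allI impI)
    fix n assume "n \<ge> n0"
    then have x: "real n \<ge> C" "real n \<ge> 1" using n0 by auto
    have "poly P (real n) = (\<Sum>i\<le>degree P. coeff P i * real n ^ i)" by (rule poly_altdef)
    also have "\<dots> \<le> (\<Sum>i\<le>degree P. \<bar>coeff P i\<bar> * real n ^ degree P)"
    proof (rule sum_mono)
      fix i assume "i \<in> {..degree P}"
      then have "real n ^ i \<le> real n ^ degree P" using x(2) by (intro power_increasing) auto
      moreover have "coeff P i * real n ^ i \<le> \<bar>coeff P i\<bar> * real n ^ i" using x(2)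
        by (intro mult_right_mono) auto
      ultimately show "coeff P i * real n ^ i \<le> \<bar>coeff P i\<bar> * real n ^ degree P"
        by (meson abs_ge_zero mult_left_mono order_trans)
    qed
    also have "\<dots> = C * real n ^ degree P" by (simp add: C_def sum_distrib_right)
    also have "\<dots> \<le> real n * real n ^ degree P" using x by (intro mult_right_mono) auto
    finally show "poly P (real n) \<le> real n ^ (degree P + 1)" by simp
  qed
  then show ?thesis by (intro exI[of _ "degree P + 1"]) auto
qed

lemma sum_pow2: "(\<Sum>i\<le>m. (2::nat)^i) < 2^Suc m"
  by (induction m) auto


lemma lll_le:
  fixes n Y :: nat
  assumes "16 \<le> n" "n \<le> 2^(2^(2^Y))"
  shows "log 2 (log 2 (log 2 (real n))) \<le> real Y"
proof -
  have l1: "log 2 (real n) \<le> real (2^(2^Y))"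
    using log2_of_power_le[of n "2^(2^Y)"] assms by simp
  have "log 2 16 \<le> log 2 (real n)" using assms by simp
  moreover have "log 2 (16::real) = 4"
    using log2_of_power_eq[of 16 4] by simp
  ultimately have l0: "4 \<le> log 2 (real n)" by simp
  have "log 2 (log 2 (real n)) \<le> log 2 (real (2^(2^Y)))"
    by (rule log_mono) (use l0 l1 in auto)
  also have "\<dots> = real (2^Y)" using log2_of_power_eq[of "2^(2^Y)" "2^Y"] by simp
  finally have l2: "log 2 (log 2 (real n)) \<le> real (2^Y)" .
  have "log 2 4 \<le> log 2 (log 2 (real n))" using l0 by simp
  moreover have "log 2 (4::real) = 2"
    using log2_of_power_eq[of 4 2] by simp
  ultimately have l3: "2 \<le> log 2 (log 2 (real n))" by simp
  have "log 2 (log 2 (log 2 (real n))) \<le> log 2 (real (2^Y))"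
    by (rule log_mono) (use l2 l3 in auto)
  also have "\<dots> = real Y" using log2_of_power_eq[of "2^Y" Y] by simp
  finally show ?thesis .
qed

theorem mainTheorem2:
  fixes \<phi> :: "nat \<Rightarrow> nat"
  assumes "filterlim \<phi> at_top at_top"
  shows "\<not> (\<exists>(f :: nat \<Rightarrow> bool list) (A :: algorithm) (P :: real poly).
            \<forall>\<^sub>F n in sequentially.
               real (length (f n)) \<le> log 2 (log 2 (log 2 (real n))) - real (\<phi> n)
             \<and> (\<exists>v<n. explores_ring_within A (f n) n v (poly P (real n))))"
proof
  assume "\<exists>(f :: nat \<Rightarrow> bool list) (A :: algorithm) (P :: real poly).
            \<forall>\<^sub>F n in sequentially.
               real (length (f n)) \<le> log 2 (log 2 (log 2 (real n))) - real (\<phi> n)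
             \<and> (\<exists>v<n. explores_ring_within A (f n) n v (poly P (real n)))"
  then obtain f :: "nat \<Rightarrow> bool list" and A :: algorithm and P :: "real poly" where
    ev: "\<forall>\<^sub>F n in sequentially.
               real (length (f n)) \<le> log 2 (log 2 (log 2 (real n))) - real (\<phi> n)
             \<and> (\<exists>v<n. explores_ring_within A (f n) n v (poly P (real n)))" by blast
  then obtain n1 where H: "\<And>n. n \<ge> n1 \<Longrightarrow>
               real (length (f n)) \<le> log 2 (log 2 (log 2 (real n))) - real (\<phi> n)
             \<and> (\<exists>v<n. explores_ring_within A (f n) n v (poly P (real n)))"
    unfolding eventually_sequentially by blast
  obtain D n2 where D: "D \<ge> 1" and n2: "\<And>n. n \<ge> n2 \<Longrightarrow> poly P (real n) \<le> real n ^ D"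
    using poly_bound[of P] by blast
  define E where "E = D + 1"
  define M where "M = E + 2"
  have "\<forall>\<^sub>F n in sequentially. \<phi> n \<ge> M"
    using assms by (simp add: filterlim_at_top)
  then obtain n3 where n3: "\<And>n. n \<ge> n3 \<Longrightarrow> \<phi> n \<ge> M"
    unfolding eventually_sequentially by blast
  define a where "a = max (max n1 n2) (max n3 16)"
  define Y where "Y = a + M + 1"
  define N :: nat where "N = 2^(2^(2^Y))"
  define hist where "hist s i = snd (ring_run A s 0 0 i)" for s i
  define tst where "tst s = (LEAST i. A s 2 (hist s i) = None)" for s
  have key: "n \<le> tst (f n) + 1 \<and> tst (f n) \<le> n^D" if "a \<le> n" for n
  proof -
    from H[of n] that obtain v where "explores_ring_within A (f n) n v (poly P (real n))"
      unfolding a_def by auto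
    then obtain t where t: "real t \<le> poly P (real n)"
      "\<forall>i<t. \<exists>p. A (f n) 2 (snd (ring_run A (f n) n v i)) = Some p \<and> p < 2"
      "A (f n) 2 (snd (ring_run A (f n) n v t)) = None"
      "{fst (ring_run A (f n) n v i) | i. i \<le> t} = {0..<n}"
      unfolding explores_ring_within_def by blast
    have tt: "tst (f n) = t"
      unfolding tst_def hist_def
    proof (rule Least_equality)
      show "A (f n) 2 (snd (ring_run A (f n) 0 0 t)) = None"
        using t(3) hist_indep by metis
    next
      fix y assume y: "A (f n) 2 (snd (ring_run A (f n) 0 0 y)) = None"
      show "t \<le> y"
      proof (rule ccontr)
        assume "\<not> t \<le> y"
        then have "y < t" by simp
        then show False using t(2) y hist_indep by (metis option.distinct(1))
      qed
    qed
    have "{fst (ring_run A (f n) n v i) | i. i \<le> t} = (\<lambda>i. fst (ring_run A (f n) n v i)) ` {..t}"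
      by auto
    then have "card {0..<n} \<le> card {..t}" using t(4) by (metis card_image_le finite_atMost)
    then have c1: "n \<le> t + 1" by simp
    have "n2 \<le> n" using that unfolding a_def by simp
    then have "real t \<le> real n ^ D" using t(1) n2[of n] by linarith
    then have "t \<le> n^D" by (metis of_nat_le_iff of_nat_power)
    with c1 tt show ?thesis by simp
  qed
  have len: "length (f n) \<le> Y - M" if "a \<le> n" "n \<le> N" for n
  proof -
    have "real (length (f n)) \<le> log 2 (log 2 (log 2 (real n))) - real (\<phi> n)"
      using H[of n] that unfolding a_def by auto
    moreover have "log 2 (log 2 (log 2 (real n))) \<le> real Y"
      using lll_le[of n Y] that unfolding a_def N_def by simp
    moreover have "\<phi> n \<ge> M" using n3[of n] that unfolding a_def by simp
    ultimately have "real (length (f n)) + real M \<le> real Y" by linarith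
    then show ?thesis by linarith
  qed
  define S where "S = f ` {a..N}"
  have S_sub: "S \<subseteq> {xs. set xs \<subseteq> (UNIV::bool set) \<and> length xs \<le> Y - M}"
    using len unfolding S_def by auto
  have finL: "finite {xs. set xs \<subseteq> (UNIV::bool set) \<and> length xs \<le> Y - M}"
    by (rule finite_lists_length_le) simp
  have "card S \<le> card {xs. set xs \<subseteq> (UNIV::bool set) \<and> length xs \<le> Y - M}"
    using S_sub finL by (rule card_mono[rotated])
  also have "\<dots> = (\<Sum>i\<le>Y - M. 2^i)"
    using card_lists_length_le[of "UNIV::bool set" "Y - M", OF finite_UNIV] by (simp only: card_UNIV_bool)
  also have "\<dots> < 2^Suc (Y - M)" by (rule sum_pow2)
  finally have cS: "card S < 2^Suc (Y - M)" .
  define U where "U = tst ` S"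
  have finU: "finite U" unfolding U_def S_def by simp
  have cU: "card U < 2^Suc (Y - M)"
    using cS card_image_le[of S tst] unfolding U_def S_def by simp
  have cov: "\<forall>n. a \<le> n \<and> n \<le> N \<longrightarrow> (\<exists>u\<in>U. n \<le> u+1 \<and> u \<le> n^D)"
  proof (intro allI impI)
    fix n assume n: "a \<le> n \<and> n \<le> N"
    then have "tst (f n) \<in> U" unfolding U_def S_def by auto
    then show "\<exists>u\<in>U. n \<le> u+1 \<and> u \<le> n^D" using key[of n] n by blast
  qed
  have a2: "2 \<le> a" unfolding a_def by simp
  define k where "k = card U"
  have Nlt: "N < a^(E^k)"
    using cover[OF finU _ a2 D cov, of k] unfolding k_def E_def by simp
  have "E \<le> 2^E" by (simp add: less_imp_le)
  have YM: "Y - 1 = E + Suc (Y - M)" unfolding Y_def M_def by simp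
  have "E * k \<le> 2^E * 2^Suc (Y - M)"
    using cU \<open>E \<le> 2^E\<close> unfolding k_def by (intro mult_mono) auto
  also have "\<dots> = 2^(E + Suc (Y - M))" by (simp only: power_add)
  also have "\<dots> = 2^(Y-1)" by (simp only: YM)
  finally have Ek: "E * k \<le> 2^(Y-1)" .
  have "a < 2^a" by simp
  also have "\<dots> \<le> 2^(Y-1)" unfolding Y_def by simp
  finally have aY: "a < 2^(Y-1)" .
  have "2^(Y-1) + 2^(Y-1) = (2::nat)^Y" unfolding Y_def by simp
  then have sumY: "a + E * k < 2^Y" using aY Ek by linarith
  have "E^k \<le> (2^E)^k" using \<open>E \<le> 2^E\<close> by (rule power_mono) simp
  also have "\<dots> = 2^(E*k)" by (simp add: power_mult)
  finally have Ek2: "E^k \<le> 2^(E*k)" .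
  have "a * E^k < 2^a * 2^(E*k)"
    using \<open>a < 2^a\<close> Ek2 by (intro mult_less_le_imp_less) (auto simp: E_def)
  also have "\<dots> = 2^(a + E*k)" by (simp add: power_add)
  also have "\<dots> < 2^(2^Y)" using sumY by simp
  finally have aE: "a * E^k < 2^(2^Y)" .
  have "a^(E^k) \<le> (2^a)^(E^k)" using \<open>a < 2^a\<close> by (intro power_mono) auto
  also have "\<dots> = 2^(a * E^k)" by (simp add: power_mult)
  also have "\<dots> < 2^(2^(2^Y))" using aE by simp
  finally have "a^(E^k) < N" unfolding N_def .
  with Nlt show False by simp
qed

end
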